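(* For any $q\in(1,2)$, with conjugate exponent $p=q/(q-1)$, any $d$ and any $\varepsilon>0$, the $\ell_q$ mean estimation problem in $\mathbb R^d$ can be solved with error $\varepsilon$ by a statistical query algorithm using $2d\log d$ queries to $\mathrm{VSTAT}_D\big((16\log(d)/\varepsilon)^p\big)$.
   Context: For a distribution $D$ over a domain $\mathcal W$ and $n>0$, the oracle $\mathrm{VSTAT}_D(n)$, given any $\phi:\mathcal W\to[0,1]$, returns some value $v$ with $|v-p_\phi|\le\max\{1/n,\sqrt{p_\phi(1-p_\phi)/n}\}$, where $p_\phi=\mathbb E_{\mathbf w\sim D}[\phi(\mathbf w)]$; a statistical query algorithm accesses $D$ only through such calls. The $\ell_q$ mean estimation problem with error $\varepsilon$: given such oracle access to an unknown distribution $D$ supported on the unit $\ell_q$ ball $\mathcal B_q^d$, output $\tilde w\in\mathbb R^d$ with $\|\tilde w-\mathbb E_{\mathbf w\sim D}[\mathbf w]\|_q\le\varepsilon$. *)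

theory Defs
  imports "HOL-Probability.Probability"
begin

definition lq_norm :: "real \<Rightarrow> real ^ 'n \<Rightarrow> real" where
  "lq_norm q x = (\<Sum>i\<in>UNIV. \<bar>x $ i\<bar> powr q) powr (1 / q)"

definition dist_on_lq_ball :: "real \<Rightarrow> (real ^ 'n) measure \<Rightarrow> bool" where
  "dist_on_lq_ball q D \<longleftrightarrow> prob_space D \<and> sets D = sets borel \<and>
     (AE w in D. lq_norm q w \<le> 1)"

definition vstat_answer :: "'w measure \<Rightarrow> real \<Rightarrow> ('w \<Rightarrow> real) \<Rightarrow> real \<Rightarrow> bool" where
  "vstat_answer D n \<phi> v \<longleftrightarrow>
     (let p = (\<integral>w. \<phi> w \<partial>D) in \<bar>v - p\<bar> \<le> max (1 / n) (sqrt (p * (1 - p) / n)))"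

text \<open>A (deterministic, possibly adaptive) statistical query algorithm making k queries:
  the i-th query is chosen as a function of the previous answers (list of length i),
  and the output is a function of all k answers.\<close>
definition sq_query_wf :: "(real list \<Rightarrow> 'w::topological_space \<Rightarrow> real) \<Rightarrow> bool" where
  "sq_query_wf Q \<longleftrightarrow> (\<forall>as. Q as \<in> borel_measurable borel \<and> (\<forall>w. Q as w \<in> {0..1}))"

definition vstat_transcript ::
  "'w measure \<Rightarrow> real \<Rightarrow> nat \<Rightarrow> (real list \<Rightarrow> 'w \<Rightarrow> real) \<Rightarrow> real list \<Rightarrow> bool" where
  "vstat_transcript D n k Q as \<longleftrightarrow> length as = k \<and>
     (\<forall>i<k. vstat_answer D n (Q (take i as)) (as ! i))"

definition solves_lq_mean_est ::
  "real \<Rightarrow> real \<Rightarrow> real \<Rightarrow> nat \<Rightarrow> (real list \<Rightarrow> real ^ 'n \<Rightarrow> real) \<Rightarrow> (real list \<Rightarrow> real ^ 'n) \<Rightarrow> bool" where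
  "solves_lq_mean_est q eps n k Q out \<longleftrightarrow> sq_query_wf Q \<and>
     (\<forall>D::(real ^ 'n) measure. dist_on_lq_ball q D \<longrightarrow>
        (\<forall>as. vstat_transcript D n k Q as \<longrightarrow>
           lq_norm q (out as - (\<integral>w. w \<partial>D)) \<le> eps))"

end

theory Submission
  imports Defs
begin


definition thr :: "real \<Rightarrow> real \<Rightarrow> real" where
  "thr n v = (if 2 / n \<le> v then v else 0)"

lemma pow_aux:
  fixes p n q :: real
  assumes "0 < p" "p \<le> c / n" "n > 0" "q > 1" "c > 0"
  shows "p powr q \<le> c powr (q - 1) * p * n powr (1 - q)"
proof -
  have "p powr q = p * p powr (q - 1)" using assms by (simp add: powr_mult_base)
  also have "p powr (q - 1) \<le> (c / n) powr (q - 1)"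
    using assms by (intro powr_mono2) auto
  also have "(c / n) powr (q - 1) = c powr (q - 1) * n powr (1 - q)"
  proof -
    have "n powr (1 - q) = 1 / n powr (q - 1)"
      using powr_minus_divide[of n "q - 1"] by simp
    thus ?thesis using assms by (simp add: powr_divide)
  qed
  finally show ?thesis using assms by (simp add: mult_left_mono mult_ac)
qed

lemma vstat_err:
  fixes q n p v :: real
  assumes q: "1 < q" "q < 2" and n: "n > 0" and p: "0 \<le> p" "p \<le> 1"
    and v: "\<bar>v - p\<bar> \<le> max (1 / n) (sqrt (p * (1 - p) / n))"
  shows "\<bar>thr n v - p\<bar> powr q \<le> 4 powr (q - 1) * p * n powr (1 - q)"
proof -
  have "sqrt (p * (1 - p) / n) \<le> sqrt (p / n)"
    using p n by (intro real_sqrt_le_mono divide_right_mono) (auto simp: mult_left_le)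
  hence e: "\<bar>v - p\<bar> \<le> max (1 / n) (sqrt (p / n))" using v by linarith
  have c1: "1 \<le> 4 powr (q - 1)" using q by (intro ge_one_powr_ge_zero) auto
  have key1: "1/n \<le> p \<Longrightarrow> 1/n \<le> sqrt (p / n)"
  proof -
    assume "1/n \<le> p"
    hence "(1/n)^2 \<le> p/n" using n by (simp add: power2_eq_square divide_simps)
    thus ?thesis by (metis real_le_rsqrt)
  qed
  show ?thesis
  proof (cases "2 / n \<le> v")
    case True
    have pn: "1/n \<le> p"
    proof (rule ccontr)
      assume "\<not> 1/n \<le> p"
      hence "p < 1/n" by simp
      hence "p / n < (1/n)^2" using n by (simp add: power2_eq_square divide_simps)
      hence "sqrt (p/n) < 1/n" using n
        by (metis abs_of_pos divide_pos_pos real_sqrt_abs real_sqrt_less_mono zero_less_one)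
      hence "\<bar>v - p\<bar> \<le> 1/n" using e by linarith
      thus False using True \<open>p < 1/n\<close> by linarith
    qed
    have pp: "p > 0" using pn n by (meson divide_pos_pos less_le_trans zero_less_one)
    have "1/n \<le> sqrt (p/n)"
      using pn key1 by blast
    hence ev: "\<bar>v - p\<bar> \<le> sqrt (p / n)" using e by linarith
    have "\<bar>thr n v - p\<bar> powr q \<le> sqrt (p / n) powr q"
      using True ev q by (auto simp: thr_def intro!: powr_mono2)
    also have "sqrt (p / n) powr q = (p / n) powr (q / 2)"
      using pp n by (simp add: powr_half_sqrt[symmetric] powr_powr)
    also have "\<dots> = p powr (q/2) / n powr (q/2)"
      using pp n by (simp add: powr_divide)
    also have "p powr (q/2) = p * p powr (q/2 - 1)"
      using pp powr_mult_base[of p "q/2 - 1"] by simp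
    also have "p * p powr (q/2 - 1) / n powr (q/2) \<le> p * (1/n) powr (q/2 - 1) / n powr (q/2)"
      using pp n q pn by (intro divide_right_mono mult_left_mono powr_mono2') auto
    also have "p * (1/n) powr (q/2 - 1) / n powr (q/2) = p * n powr (1 - q)"
    proof -
      have "(1/n) powr (q/2 - 1) = 1 / n powr (q/2 - 1)"
        using n by (simp add: powr_divide)
      moreover have "n powr (q/2 - 1) * n powr (q/2) = n powr (q - 1)"
        using n by (simp add: powr_add[symmetric])
      moreover have "n powr (1 - q) = 1 / n powr (q - 1)"
        using powr_minus_divide[of n "q - 1"] by simp
      ultimately show ?thesis by simp
    qed
    also have "\<dots> \<le> 4 powr (q - 1) * p * n powr (1 - q)"
      using c1 pp by (simp add: mult_right_mono)
    finally show ?thesis .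
  next
    case False
    hence t: "thr n v = 0" by (simp add: thr_def)
    show ?thesis
    proof (cases "p = 0")
      case True thus ?thesis using t q by simp
    next
      case p0: False
      have "p \<le> 4 / n"
      proof (cases "p \<le> 1/n")
        case True thus ?thesis using n by (simp add: divide_simps)
      next
        case pn: False
        hence "1/n \<le> sqrt (p / n)" using key1 by simp
        hence "\<bar>v - p\<bar> \<le> sqrt (p / n)" using e by linarith
        hence lt: "p < 2/n + sqrt (p/n)" using False by linarith
        show ?thesis
        proof (rule ccontr)
          assume "\<not> p \<le> 4/n"
          hence "4/n < p" by simp
          hence "1/n \<le> p/4" by simp
          hence "p * (1/n) \<le> p * (p/4)" using p by (intro mult_left_mono) auto
          hence "(p/2)^2 \<ge> p / n" by (simp add: power2_eq_square)
          hence "sqrt (p/n) \<le> sqrt ((p/2)^2)" by (rule real_sqrt_le_mono)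
          hence "sqrt (p/n) \<le> p/2" using p by simp
          thus False using lt \<open>4/n < p\<close> by linarith
        qed
      qed
      hence "p powr q \<le> 4 powr (q - 1) * p * n powr (1 - q)"
        using pow_aux[of p 4 n q] p0 p n q by auto
      thus ?thesis using t p by simp
    qed
  qed
qed



lemma power_mean_pos:
  fixes a :: "'a \<Rightarrow> real"
  assumes "finite S" "S \<noteq> {}" "\<And>i. i \<in> S \<Longrightarrow> a i > 0" "q \<ge> 1"
  shows "(\<Sum>i\<in>S. a i) powr q \<le> real (card S) powr (q - 1) * (\<Sum>i\<in>S. a i powr q)"
proof -
  define K where "K = real (card S)"
  have K: "K > 0" using assms by (simp add: K_def card_gt_0_iff)
  have "(\<lambda>x::real. x powr q) (\<Sum>i\<in>S. (1/K) *\<^sub>R a i) \<le> (\<Sum>i\<in>S. (1/K) * (a i powr q))"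
    by (rule convex_on_sum[OF assms(1,2) powr_convex[OF assms(4)]])
       (use assms K in \<open>auto simp: K_def\<close>)
  hence "((\<Sum>i\<in>S. a i) / K) powr q \<le> (\<Sum>i\<in>S. a i powr q) / K"
    by (simp add: sum_divide_distrib[symmetric] sum_distrib_left[symmetric] divide_inverse mult.commute)
  moreover have "((\<Sum>i\<in>S. a i) / K) powr q = (\<Sum>i\<in>S. a i) powr q / K powr q"
    using assms K by (simp add: powr_divide sum_nonneg less_imp_le)
  ultimately have "(\<Sum>i\<in>S. a i) powr q \<le> K powr q * ((\<Sum>i\<in>S. a i powr q) / K)"
    using K by (simp add: divide_simps mult.commute)
  also have "K powr q = K powr (q - 1) * K"
    using K powr_add[of K "q - 1" 1] by simp
  finally show ?thesis using K by (simp add: K_def)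
qed

lemma power_mean:
  fixes a :: "'a \<Rightarrow> real"
  assumes "finite S" "\<And>i. i \<in> S \<Longrightarrow> a i \<ge> 0" "q \<ge> 1"
  shows "(\<Sum>i\<in>S. a i) powr q \<le> real (card S) powr (q - 1) * (\<Sum>i\<in>S. a i powr q)"
proof -
  define S' where "S' = {i\<in>S. a i > 0}"
  have fin: "finite S'" using assms by (simp add: S'_def)
  have sub: "S' \<subseteq> S" by (auto simp: S'_def)
  have s1: "(\<Sum>i\<in>S. a i) = (\<Sum>i\<in>S'. a i)"
    using assms by (intro sum.mono_neutral_right) (auto simp: S'_def less_le)
  have s2: "(\<Sum>i\<in>S. a i powr q) = (\<Sum>i\<in>S'. a i powr q)"
    using assms by (intro sum.mono_neutral_right) (auto simp: S'_def less_le)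
  show ?thesis
  proof (cases "S' = {}")
    case True thus ?thesis using s1 s2 assms by simp
  next
    case False
    have "(\<Sum>i\<in>S. a i) powr q \<le> real (card S') powr (q - 1) * (\<Sum>i\<in>S'. a i powr q)"
      using power_mean_pos[OF fin False, of a q] assms s1 by (auto simp: S'_def)
    also have "\<dots> \<le> real (card S) powr (q - 1) * (\<Sum>i\<in>S'. a i powr q)"
      using assms sub False fin
      by (intro mult_right_mono powr_mono2 sum_nonneg) (auto intro: card_mono card_gt_0_iff[THEN iffD2])
    finally show ?thesis using s2 by simp
  qed
qed



definition lev :: "nat \<Rightarrow> nat \<Rightarrow> real \<Rightarrow> real" where
  "lev M j x = (min x ((1/2)^j) - (if Suc j < M then min x ((1/2)^Suc j) else 0)) * 2^j"

lemma lev_0[simp]: "lev M j 0 = 0"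
  by (simp add: lev_def)

lemma lev_bounds:
  assumes "0 \<le> x" shows "0 \<le> lev M j x" "lev M j x \<le> 1"
proof -
  have s: "((1::real)/2)^Suc j \<le> (1/2)^j" "((1::real)/2)^j / 2 \<le> (1/2)^j" "0 \<le> ((1::real)/2)^j"
    by (simp_all add: power_le_imp_le_exp)
  have "min x ((1/2::real)^Suc j) \<le> min x ((1/2)^j)" by (rule min.mono) (simp_all only: s order.refl)
  hence a: "0 \<le> min x ((1/2)^j) - (if Suc j < M then min x ((1/2)^Suc j) else 0)"
    using assms s by (cases "Suc j < M") auto
  have b: "min x ((1/2)^j) - (if Suc j < M then min x ((1/2)^Suc j) else 0) \<le> (1/2)^j"
  proof -
    have "0 \<le> (if Suc j < M then min x ((1/2::real)^Suc j) else 0)"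
      using assms by auto
    moreover have "min x ((1/2::real)^j) \<le> (1/2)^j" by simp
    ultimately show ?thesis by linarith
  qed
  show "0 \<le> lev M j x" using a by (simp add: lev_def)
  have "lev M j x \<le> (1/2)^j * 2^j" unfolding lev_def by (rule mult_right_mono[OF b]) simp
  thus "lev M j x \<le> 1" by (simp add: power_mult_distrib[symmetric])
qed

lemma lev_abs: "lev M j (max 0 x) + lev M j (max 0 (- x)) = lev M j \<bar>x\<bar>"
  by (cases "x \<ge> 0") (auto simp: max_def)

lemma lev_tele:
  assumes "0 \<le> x" "0 < M"
  shows "(\<Sum>j<M. (1/2)^j * lev M j x) = min x 1"
proof -
  obtain m where M: "M = Suc m" using assms by (cases M) auto
  have e: "\<And>j. (1/2::real)^j * lev M j x = min x ((1/2)^j) - (if Suc j < M then min x ((1/2)^Suc j) else 0)"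
    by (simp add: lev_def power_mult_distrib[symmetric])
  have "(\<Sum>j<M. (1/2)^j * lev M j x) = (\<Sum>j<Suc m. min x ((1/2)^j)) - (\<Sum>j<Suc m. (if Suc j < Suc m then min x ((1/2::real)^Suc j) else 0))"
  proof -
    have "(\<Sum>j<M. (1/2)^j * lev M j x) = (\<Sum>j<M. min x ((1/2::real)^j) - (if Suc j < M then min x ((1/2::real)^Suc j) else 0))"
      using e by simp
    thus ?thesis using M by (simp only: sum_subtractf)
  qed
  also have "(\<Sum>j<Suc m. (if Suc j < Suc m then min x ((1/2::real)^Suc j) else 0)) = (\<Sum>j<m. min x ((1/2)^Suc j))"
    by (simp add: sum.lessThan_Suc)
  also have "(\<Sum>j<Suc m. min x ((1/2::real)^j)) = min x 1 + (\<Sum>j<m. min x ((1/2)^Suc j))"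
    by (subst sum.lessThan_Suc_shift) simp
  finally show ?thesis by simp
qed

lemma lev_le_pow:
  assumes "0 \<le> x" "Suc j < M" "q > 0"
  shows "lev M j x \<le> (2^Suc j * min x 1) powr q"
proof (cases "x \<le> (1/2)^Suc j")
  case True
  have s: "((1::real)/2)^Suc j \<le> (1/2)^j" "((1::real)/2)^j / 2 \<le> (1/2)^j" "(1/2::real)^j \<le> 2"
  proof -
    show "((1::real)/2)^Suc j \<le> (1/2)^j" "((1::real)/2)^j / 2 \<le> (1/2)^j" by (simp_all add: power_le_imp_le_exp)
    have "(1/2::real)^j \<le> 1" by (rule power_le_one) auto
    thus "(1/2::real)^j \<le> 2" by linarith
  qed
  hence "lev M j x = 0" using True assms by (simp add: lev_def)
  thus ?thesis by simp
next
  case False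
  have h1: "((1::real)/2)^Suc j \<le> 1" by (rule power_le_one) auto
  have "1 < 2^Suc j * min x 1"
  proof (cases "x \<le> 1")
    case True
    hence "(1/2)^Suc j < x" using False by simp
    hence "2^Suc j * (1/2)^Suc j < 2^Suc j * x" by simp
    thus ?thesis using True by (simp add: power_mult_distrib[symmetric])
  next
    case f: False
    have "(1::real) < 2^Suc j" by (rule one_less_power) auto
    thus ?thesis using f by simp
  qed
  hence "1 \<le> (2^Suc j * min x 1) powr q" using assms by (intro ge_one_powr_ge_zero) auto
  thus ?thesis using lev_bounds(2)[OF assms(1), of M j] by linarith
qed

lemma lev_meas: "(\<lambda>w::real^'n. lev M j (max 0 (c * w $ i))) \<in> borel_measurable borel"
  unfolding lev_def by measurable



lemma lq_ball_sum:
  fixes w :: "real ^ 'n"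
  assumes "lq_norm q w \<le> 1" "q > 0"
  shows "(\<Sum>i\<in>UNIV. \<bar>w $ i\<bar> powr q) \<le> 1"
proof (rule ccontr)
  let ?S = "\<Sum>i\<in>UNIV. \<bar>w $ i\<bar> powr q"
  assume "\<not> ?S \<le> 1"
  hence "1 < ?S powr (1/q)" using assms by (intro gr_one_powr) auto
  thus False using assms by (simp add: lq_norm_def)
qed

lemma lq_ball_coord:
  fixes w :: "real ^ 'n"
  assumes "lq_norm q w \<le> 1" "q > 0"
  shows "\<bar>w $ i\<bar> \<le> 1"
proof (rule ccontr)
  assume "\<not> \<bar>w $ i\<bar> \<le> 1"
  hence "1 < \<bar>w $ i\<bar> powr q" using assms by (intro gr_one_powr) auto
  also have "\<bar>w $ i\<bar> powr q \<le> (\<Sum>i\<in>UNIV. \<bar>w $ i\<bar> powr q)"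
    by (rule member_le_sum) auto
  finally show False using lq_ball_sum[OF assms] by simp
qed

lemma meas_D:
  assumes "sets D = sets (borel :: ('a::topological_space) measure)" "f \<in> borel_measurable borel"
  shows "f \<in> borel_measurable D"
  using assms measurable_cong_sets[OF assms(1) refl] by simp

lemma lev_integrable:
  assumes "prob_space D" "sets D = sets (borel :: (real^'n) measure)"
  shows "integrable D (\<lambda>w. lev M j (max 0 (c * w $ i)))"
proof -
  interpret prob_space D by fact
  show ?thesis
    by (rule integrable_const_bound[where B=1])
       (auto intro!: meas_D[OF assms(2)] lev_meas simp: abs_le_iff lev_bounds)
qed

lemma lev_int_bounds:
  assumes "prob_space D" "sets D = sets (borel :: (real^'n) measure)"
  shows "0 \<le> (\<integral>w. lev M j (max 0 (c * w $ i)) \<partial>D)" "(\<integral>w. lev M j (max 0 (c * w $ i)) \<partial>D) \<le> 1"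
proof -
  interpret prob_space D by fact
  show "0 \<le> (\<integral>w. lev M j (max 0 (c * w $ i)) \<partial>D)"
    by (rule integral_nonneg_AE) (simp add: lev_bounds)
  have "(\<integral>w. lev M j (max 0 (c * w $ i)) \<partial>D) \<le> (\<integral>w. 1 \<partial>D)"
    by (rule integral_mono_AE[OF lev_integrable[OF assms]]) (auto simp: lev_bounds)
  thus "(\<integral>w. lev M j (max 0 (c * w $ i)) \<partial>D) \<le> 1" by (simp add: prob_space)
qed

lemma mean_decomp:
  fixes D :: "(real ^ 'n) measure"
  assumes D: "dist_on_lq_ball q D" and q: "q > 0" and M: "M > 0"
  shows "(\<integral>w. w \<partial>D) $ i = (\<Sum>j<M. (1/2)^j * ((\<integral>w. lev M j (max 0 (1 * w $ i)) \<partial>D) - (\<integral>w. lev M j (max 0 (-1 * w $ i)) \<partial>D)))"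
proof -
  have pD: "prob_space D" and sD: "sets D = sets borel" and ae: "AE w in D. lq_norm q w \<le> 1"
    using D by (auto simp: dist_on_lq_ball_def)
  interpret prob_space D by fact
  have intw: "integrable D (\<lambda>w. w)"
  proof (rule integrable_const_bound[where B="real CARD('n)"])
    show "AE x in D. norm x \<le> real CARD('n)"
      using ae
    proof eventually_elim
      case (elim w)
      have "norm w \<le> (\<Sum>i\<in>UNIV. \<bar>w $ i\<bar>)" by (rule norm_le_l1_cart)
      also have "\<dots> \<le> (\<Sum>i\<in>(UNIV::'n set). 1)"
        by (rule sum_mono) (rule lq_ball_coord[OF elim q])
      finally show ?case by simp
    qed
    show "(\<lambda>w. w) \<in> borel_measurable D" by (rule meas_D[OF sD]) simp
  qed
  have "(\<integral>w. w \<partial>D) $ i = (\<integral>w. w $ i \<partial>D)"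
    using integral_bounded_linear[OF bounded_linear_vec_nth intw, of i] by simp
  also have "\<dots> = (\<integral>w. (\<Sum>j<M. (1/2)^j * (lev M j (max 0 (1 * w $ i)) - lev M j (max 0 (-1 * w $ i)))) \<partial>D)"
  proof (rule integral_cong_AE)
    show "(\<lambda>w. w $ i) \<in> borel_measurable D" by (rule meas_D[OF sD]) simp
    show "(\<lambda>w. \<Sum>j<M. (1/2)^j * (lev M j (max 0 (1 * w $ i)) - lev M j (max 0 (-1 * w $ i)))) \<in> borel_measurable D"
      by (rule meas_D[OF sD]) (intro borel_measurable_sum borel_measurable_times borel_measurable_diff lev_meas borel_measurable_const)
    show "AE w in D. w $ i = (\<Sum>j<M. (1/2)^j * (lev M j (max 0 (1 * w $ i)) - lev M j (max 0 (-1 * w $ i))))"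
      using ae
    proof eventually_elim
      case (elim w)
      have a: "\<bar>w $ i\<bar> \<le> 1" by (rule lq_ball_coord[OF elim q])
      have "(\<Sum>j<M. (1/2)^j * (lev M j (max 0 (1 * w $ i)) - lev M j (max 0 (-1 * w $ i))))
          = (\<Sum>j<M. (1/2)^j * lev M j (max 0 (w $ i))) - (\<Sum>j<M. (1/2)^j * lev M j (max 0 (- (w $ i))))"
        by (simp add: right_diff_distrib sum_subtractf)
      also have "\<dots> = min (max 0 (w $ i)) 1 - min (max 0 (- (w $ i))) 1"
        using M by (simp add: lev_tele)
      also have "\<dots> = w $ i" using a by (auto simp: max_def min_def)
      finally show ?case by simp
    qed
  qed
  also have "\<dots> = (\<Sum>j<M. (1/2)^j * ((\<integral>w. lev M j (max 0 (1 * w $ i)) \<partial>D) - (\<integral>w. lev M j (max 0 (-1 * w $ i)) \<partial>D)))"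
  proof -
    have I: "\<And>c. integrable D (\<lambda>w. lev M j (max 0 (c * w $ i)))" for j
      by (rule lev_integrable[OF pD sD])
    have II: "integrable D (\<lambda>w. (1/2)^j * (lev M j (max 0 (1 * w $ i)) - lev M j (max 0 (-1 * w $ i))))" for j
      using I[of j 1] I[of j "-1"] by simp
    have "(\<integral>w. (\<Sum>j<M. (1/2)^j * (lev M j (max 0 (1 * w $ i)) - lev M j (max 0 (-1 * w $ i)))) \<partial>D)
       = (\<Sum>j<M. (\<integral>w. (1/2)^j * (lev M j (max 0 (1 * w $ i)) - lev M j (max 0 (-1 * w $ i))) \<partial>D))"
      by (rule Bochner_Integration.integral_sum, rule II)
    also have "\<dots> = (\<Sum>j<M. (1/2)^j * ((\<integral>w. lev M j (max 0 (1 * w $ i)) \<partial>D) - (\<integral>w. lev M j (max 0 (-1 * w $ i)) \<partial>D)))"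
      by (rule sum.cong[OF refl]) (simp only: integral_mult_right_zero Bochner_Integration.integral_diff[OF I I])
    finally show ?thesis .
  qed
  finally show ?thesis .
qed



lemma level_sum:
  fixes D :: "(real ^ 'n) measure"
  assumes D: "dist_on_lq_ball q D" and q: "q > 0"
  shows "(\<Sum>i\<in>UNIV. (\<integral>w. lev M j (max 0 (1 * w $ i)) \<partial>D) + (\<integral>w. lev M j (max 0 (-1 * w $ i)) \<partial>D))
          \<le> (if Suc j < M then (2^Suc j) powr q else real CARD('n))"
proof -
  have pD: "prob_space D" and sD: "sets D = sets borel" and ae: "AE w in D. lq_norm q w \<le> 1"
    using D by (auto simp: dist_on_lq_ball_def)
  interpret prob_space D by fact
  have I: "integrable D (\<lambda>w. lev M j (max 0 (c * w $ i)))" for c i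
    by (rule lev_integrable[OF pD sD])
  have Iabs: "integrable D (\<lambda>w. lev M j \<bar>w $ i\<bar>)" for i
    using Bochner_Integration.integrable_add[OF I[of 1 i] I[of "-1" i]] by (simp add: lev_abs)
  have ISum: "integrable D (\<lambda>w. \<Sum>i\<in>UNIV. lev M j \<bar>w $ i\<bar>)"
    by (rule Bochner_Integration.integrable_sum) (rule Iabs)
  have "(\<Sum>i\<in>UNIV. (\<integral>w. lev M j (max 0 (1 * w $ i)) \<partial>D) + (\<integral>w. lev M j (max 0 (-1 * w $ i)) \<partial>D))
      = (\<Sum>i\<in>UNIV. (\<integral>w. lev M j \<bar>w $ i\<bar> \<partial>D))"
  proof (rule sum.cong[OF refl])
    fix i :: 'n
    have "(\<integral>w. lev M j (max 0 (1 * w $ i)) \<partial>D) + (\<integral>w. lev M j (max 0 (-1 * w $ i)) \<partial>D)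
        = (\<integral>w. lev M j (max 0 (1 * w $ i)) + lev M j (max 0 (-1 * w $ i)) \<partial>D)"
      by (rule Bochner_Integration.integral_add[OF I I, symmetric])
    also have "\<dots> = (\<integral>w. lev M j \<bar>w $ i\<bar> \<partial>D)"
      using lev_abs[of M j] by simp
    finally show "(\<integral>w. lev M j (max 0 (1 * w $ i)) \<partial>D) + (\<integral>w. lev M j (max 0 (-1 * w $ i)) \<partial>D)
        = (\<integral>w. lev M j \<bar>w $ i\<bar> \<partial>D)" .
  qed
  also have "\<dots> = (\<integral>w. (\<Sum>i\<in>UNIV. lev M j \<bar>w $ i\<bar>) \<partial>D)"
    by (rule Bochner_Integration.integral_sum[symmetric]) (rule Iabs)
  also have "\<dots> \<le> (\<integral>w. (if Suc j < M then (2^Suc j) powr q else real CARD('n)) \<partial>D)"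
  proof (rule integral_mono_AE[OF ISum])
    show "integrable D (\<lambda>w. if Suc j < M then (2^Suc j) powr q else real CARD('n))" by simp
    show "AE w in D. (\<Sum>i\<in>UNIV. lev M j \<bar>w $ i\<bar>) \<le> (if Suc j < M then (2^Suc j) powr q else real CARD('n))"
      using ae
    proof eventually_elim
      case (elim w)
      show ?case
      proof (cases "Suc j < M")
        case True
        have "(\<Sum>i\<in>UNIV. lev M j \<bar>w $ i\<bar>) \<le> (\<Sum>i\<in>UNIV. (2^Suc j * min \<bar>w $ i\<bar> 1) powr q)"
          by (rule sum_mono) (rule lev_le_pow[OF _ True q], simp)
        also have "\<dots> = (2^Suc j) powr q * (\<Sum>i\<in>UNIV. (min \<bar>w $ i\<bar> 1) powr q)"
          by (simp add: powr_mult sum_distrib_left)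
        also have "(\<Sum>i\<in>UNIV. (min \<bar>w $ i\<bar> 1) powr q) \<le> (\<Sum>i\<in>UNIV. \<bar>w $ i\<bar> powr q)"
          by (rule sum_mono) (rule powr_mono2, use q in auto)
        also have "\<dots> \<le> 1" by (rule lq_ball_sum[OF elim q])
        finally show ?thesis using True by simp
      next
        case False
        have "(\<Sum>i\<in>UNIV. lev M j \<bar>w $ i\<bar>) \<le> (\<Sum>i\<in>(UNIV::'n set). 1)"
          by (rule sum_mono) (rule lev_bounds(2), simp)
        thus ?thesis using False by simp
      qed
    qed
  qed
  also have "\<dots> = (if Suc j < M then (2^Suc j) powr q else real CARD('n))"
    by (simp add: prob_space)
  finally show ?thesis .
qed



lemma tail_num:
  fixes q d :: real and M :: nat
  assumes q: "q > 1" and d: "2 \<le> d" and M: "M \<ge> 1" and dM: "d < 2 * 2^M"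
  shows "((1/2)^(M - 1)) powr q * d \<le> 2 * 2 powr q"
proof -
  have e1: "(1/2::real)^(M - 1) = 2 / 2^M"
    using M by (cases M) (auto simp: power_divide)
  have "2 / 2^M \<le> 4 / d" using dM d by (simp add: divide_simps) 
  hence "((1/2)^(M - 1)) powr q \<le> (4 / d) powr q"
    using e1 q by (intro powr_mono2) auto
  hence "((1/2)^(M - 1)) powr q * d \<le> (4 / d) powr q * d"
    using d by (intro mult_right_mono) auto
  also have "(4 / d) powr q * d = 4 powr q * d powr (1 - q)"
  proof -
    have "(4 / d) powr q = 4 powr q / d powr q" using d by (simp add: powr_divide)
    moreover have "d powr (1 - q) = d / d powr q"
      using d by (simp add: powr_diff)
    ultimately show ?thesis by simp
  qed
  also have "\<dots> \<le> 4 powr q * 2 powr (1 - q)"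
    using d q by (intro mult_left_mono powr_mono2') auto
  also have "4 powr q * 2 powr (1 - q) = 2 * 2 powr q"
  proof -
    have "(4::real) powr q = 2 powr q * 2 powr q"
      by (simp add: powr_mult[symmetric])
    moreover have "(2::real) powr q * 2 powr (1 - q) = 2"
      by (simp add: powr_add[symmetric])
    ultimately show ?thesis by (simp add: mult_ac)
  qed
  finally show ?thesis .
qed

lemma final_num:
  fixes q \<epsilon> L M n :: real
  assumes q: "q > 1" and e: "\<epsilon> > 0" and L: "L \<ge> 1" and M: "1 \<le> M" "M \<le> L"
    and n: "n = (16 * L / \<epsilon>) powr (q / (q - 1))"
  shows "(2 * M) powr (q - 1) * 4 powr (q - 1) * n powr (1 - q) * (M * (2 * 2 powr q)) \<le> \<epsilon> powr q"
proof -
  have np: "n powr (1 - q) = (16 * L / \<epsilon>) powr (- q)"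
  proof -
    have "q / (q - 1) * (1 - q) = - q" using q by (simp add: field_simps)
    thus ?thesis using n by (simp add: powr_powr)
  qed
  have a: "(2 * M) powr (q - 1) * (2 * M) = (2 * M) powr q"
    using M powr_add[of "2*M" "q - 1" 1] by simp
  have b: "(4::real) powr (q - 1) = 4 powr q / 4"
    by (simp add: powr_diff)
  have "(2 * M) powr (q - 1) * 4 powr (q - 1) * n powr (1 - q) * (M * (2 * 2 powr q))
      = ((2 * M) powr (q - 1) * (2 * M)) * 4 powr (q - 1) * 2 powr q * n powr (1 - q)"
    by (simp add: mult_ac)
  also have "\<dots> = ((2 * M) powr q * 4 powr q * 2 powr q * (16 * L / \<epsilon>) powr (- q)) / 4"
    by (simp add: a b np)
  also have "(2 * M) powr q * 4 powr q * 2 powr q * (16 * L / \<epsilon>) powr (- q) = (2 * M * 4 * 2 / (16 * L / \<epsilon>)) powr q"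
  proof -
    have "(2 * M) powr q * 4 powr q * 2 powr q = (2 * M * 4 * 2) powr q"
      using M by (simp add: powr_mult[symmetric] mult_ac)
    moreover have "(16 * L / \<epsilon>) powr (- q) = 1 / (16 * L / \<epsilon>) powr q"
      by (simp add: powr_minus_divide)
    moreover have "(2 * M * 4 * 2) powr q / (16 * L / \<epsilon>) powr q = (2 * M * 4 * 2 / (16 * L / \<epsilon>)) powr q"
      using M L e by (intro powr_divide[symmetric])
    ultimately show ?thesis by simp
  qed
  also have "2 * M * 4 * 2 / (16 * L / \<epsilon>) = M * \<epsilon> / L" using L by (simp add: field_simps)
  also have "(M * \<epsilon> / L) powr q / 4 \<le> \<epsilon> powr q"
  proof -
    have "(M * \<epsilon> / L) powr q \<le> \<epsilon> powr q"
    proof (rule powr_mono2)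
      show "M * \<epsilon> / L \<le> \<epsilon>" using M L e by (simp add: divide_simps mult_right_mono)
    qed (use q M L e in auto)
    moreover have "0 \<le> (M * \<epsilon> / L) powr q" by simp
    ultimately show ?thesis by linarith
  qed
  finally show ?thesis .
qed



theorem theorem3p15:
  fixes q \<epsilon> :: real
  assumes "1 < q" "q < 2" and "\<epsilon> > 0" and "CARD('n) \<ge> 2"
  shows "\<exists>k Q (out :: real list \<Rightarrow> real ^ 'n).
           real k \<le> 2 * real CARD('n) * log 2 (real CARD('n)) \<and>
           solves_lq_mean_est q \<epsilon> ((16 * log 2 (real CARD('n)) / \<epsilon>) powr (q / (q - 1))) k Q out"
proof -
  note q = assms(1,2) and e = assms(3)
  define d where "d = CARD('n)"
  have d2: "2 \<le> d" using assms(4) by (simp add: d_def)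
  define L where "L = log 2 (real d)"
  define M where "M = nat \<lfloor>L\<rfloor>"
  define n where "n = (16 * L / \<epsilon>) powr (q / (q - 1))"
  have L1: "1 \<le> L" using d2 by (simp add: L_def)
  have M1: "1 \<le> M" using L1 by (simp add: M_def le_nat_floor)
  have hML: "real M \<le> L" using L1 by (simp add: M_def)
  have dM: "real d < 2 * 2^M"
  proof -
    have "L < real M + 1" using L1 by (simp add: M_def)
    hence "2 powr L < 2 powr (real M + 1)" by simp
    moreover have "2 powr L = real d" using d2 by (simp add: L_def)
    moreover have "(2::real) powr (real M + 1) = 2 * 2^M"
      by (simp add: powr_add powr_realpow)
    ultimately show ?thesis by simp
  qed
  have n0: "n > 0" using L1 e by (simp add: n_def)
  obtain h where h: "bij_betw h (UNIV::'n set) {0..<d}"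
    using ex_bij_betw_finite_nat[of "UNIV::'n set"] by (auto simp: d_def)
  define hinv where "hinv = inv_into (UNIV::'n set) h"
  have hinv: "hinv (h i) = i" for i
    using h by (simp add: hinv_def bij_betw_def)
  have hlt: "h i < d" for i using h by (auto simp: bij_betw_def)
  define sg where "sg b = (if b then 1 else -1 :: real)" for b
  define \<Phi> where "\<Phi> i b j = (\<lambda>w::real^'n. lev M j (max 0 (sg b * w $ i)))" for i b j
  define idx where "idx i b j = (2 * h i + (if b then 1 else 0)) * M + j" for i and b :: bool and j
  define Q where "Q as = \<Phi> (hinv (length as div M div 2)) (length as div M mod 2 = 1) (length as mod M)" for as :: "real list"
  define k where "k = 2 * d * M"
  define out where "out as = (\<chi> i. \<Sum>j<M. (1/2)^j * (thr n (as ! idx i True j) - thr n (as ! idx i False j)))" for as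
  have idx_lt: "idx i b j < k" if "j < M" for i b j
  proof -
    have "idx i b j < (2 * h i + (if b then 1 else 0) + 1) * M" using that by (simp add: idx_def)
    also have "\<dots> \<le> (2 * d) * M" using hlt[of i] by (intro mult_right_mono) auto
    finally show ?thesis by (simp add: k_def)
  qed
  have Q_idx: "Q xs = \<Phi> i b j" if "length xs = idx i b j" "j < M" for xs i b j
  proof -
    have a: "length xs div M = 2 * h i + (if b then 1 else 0)" "length xs mod M = j"
      using that by (simp_all add: idx_def)
    have b1: "(2 * h i + (if b then 1 else 0)) div 2 = h i" "((2 * h i + (if b then 1 else 0)) mod 2 = 1) = b"
      by auto
    show ?thesis unfolding Q_def a b1 hinv ..
  qed
  have wf: "sq_query_wf Q"
    unfolding sq_query_wf_def
  proof (intro allI conjI)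
    fix as :: "real list"
    show "Q as \<in> borel_measurable borel" unfolding Q_def \<Phi>_def by (rule lev_meas)
    fix w
    show "Q as w \<in> {0..1}" unfolding Q_def \<Phi>_def by (simp add: lev_bounds)
  qed
  have kbound: "real k \<le> 2 * real CARD('n) * log 2 (real CARD('n))"
    using hML d2 by (simp add: k_def d_def[symmetric] L_def[symmetric])
  have solves: "solves_lq_mean_est q \<epsilon> n k Q out"
    unfolding solves_lq_mean_est_def
  proof (intro conjI allI impI wf)
    fix D :: "(real ^ 'n) measure" and as
    assume D: "dist_on_lq_ball q D" and tr: "vstat_transcript D n k Q as"
    have pD: "prob_space D" and sD: "sets D = sets borel"
      using D by (auto simp: dist_on_lq_ball_def)
    define P where "P i b j = (\<integral>w. \<Phi> i b j w \<partial>D)" for i b j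
    define err where "err i b j = \<bar>thr n (as ! idx i b j) - P i b j\<bar>" for i b j
    have P01: "0 \<le> P i b j" "P i b j \<le> 1" for i b j
      unfolding P_def \<Phi>_def by (rule lev_int_bounds[OF pD sD])+
    have errb: "err i b j powr q \<le> 4 powr (q - 1) * P i b j * n powr (1 - q)" if "j < M" for i b j
    proof -
      have len: "length as = k" using tr by (simp add: vstat_transcript_def)
      have "vstat_answer D n (Q (take (idx i b j) as)) (as ! idx i b j)"
        using tr idx_lt[OF that] by (simp add: vstat_transcript_def)
      moreover have "Q (take (idx i b j) as) = \<Phi> i b j"
        using len idx_lt[OF that, of i b] that by (intro Q_idx) auto
      ultimately have "\<bar>as ! idx i b j - P i b j\<bar> \<le> max (1 / n) (sqrt (P i b j * (1 - P i b j) / n))"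
        by (simp add: vstat_answer_def P_def Let_def)
      thus ?thesis unfolding err_def using vstat_err[OF q n0 P01] by blast
    qed
    have mu: "(\<integral>w. w \<partial>D) $ i = (\<Sum>j<M. (1/2)^j * (P i True j - P i False j))" for i
      using mean_decomp[OF D _ _, of M i] q M1 by (simp add: P_def \<Phi>_def sg_def)
    define \<mu> where "\<mu> = (\<integral>w. w \<partial>D)"
    define e where "e i = \<bar>(out as - \<mu>) $ i\<bar>" for i
    have e_le: "e i \<le> (\<Sum>j<M. (1/2)^j * (err i True j + err i False j))" for i
    proof -
      have "(out as - \<mu>) $ i = (\<Sum>j<M. (1/2)^j * (thr n (as ! idx i True j) - thr n (as ! idx i False j)))
               - (\<Sum>j<M. (1/2)^j * (P i True j - P i False j))"
        by (simp add: out_def mu \<mu>_def)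
      also have "\<dots> = (\<Sum>j<M. (1/2)^j * (thr n (as ! idx i True j) - thr n (as ! idx i False j))
               - (1/2)^j * (P i True j - P i False j))"
        by (simp add: sum_subtractf)
      finally have "e i = \<bar>\<Sum>j<M. (1/2)^j * (thr n (as ! idx i True j) - thr n (as ! idx i False j))
               - (1/2)^j * (P i True j - P i False j)\<bar>" by (simp add: e_def)
      also have "\<dots> \<le> (\<Sum>j<M. \<bar>(1/2)^j * (thr n (as ! idx i True j) - thr n (as ! idx i False j))
               - (1/2)^j * (P i True j - P i False j)\<bar>)" by (rule sum_abs)
      also have "\<dots> \<le> (\<Sum>j<M. (1/2)^j * (err i True j + err i False j))"
      proof (rule sum_mono)
        fix j
        have "\<bar>(1/2::real)^j * (thr n (as ! idx i True j) - thr n (as ! idx i False j))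
               - (1/2)^j * (P i True j - P i False j)\<bar>
              = (1/2)^j * \<bar>(thr n (as ! idx i True j) - P i True j) - (thr n (as ! idx i False j) - P i False j)\<bar>"
        proof -
          have "(1/2::real)^j * (thr n (as ! idx i True j) - thr n (as ! idx i False j))
               - (1/2)^j * (P i True j - P i False j)
              = (1/2)^j * ((thr n (as ! idx i True j) - P i True j) - (thr n (as ! idx i False j) - P i False j))"
            by (simp add: algebra_simps)
          thus ?thesis by (simp only: abs_mult) simp
        qed
        also have "\<dots> \<le> (1/2)^j * (err i True j + err i False j)"
          by (intro mult_left_mono) (auto simp: err_def)
        finally show "\<bar>(1/2::real)^j * (thr n (as ! idx i True j) - thr n (as ! idx i False j))
               - (1/2)^j * (P i True j - P i False j)\<bar> \<le> (1/2)^j * (err i True j + err i False j)" .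
      qed
      finally show ?thesis .
    qed
    define C0 where "C0 = 4 powr (q - 1) * n powr (1 - q)"
    have C0: "0 \<le> C0" by (simp add: C0_def)
    have epow: "e i powr q \<le> (2 * real M) powr (q - 1) * C0 * (\<Sum>j<M. ((1/2)^j) powr q * (P i True j + P i False j))" for i
    proof -
      define S where "S = {..<M} \<times> (UNIV :: bool set)"
      define a where "a x = (1/2)^(fst x) * err i (snd x) (fst x)" for x
      have finS: "finite S" by (simp add: S_def)
      have cardS: "card S = 2 * M" by (simp add: S_def card_cartesian_product)
      have a0: "0 \<le> a x" for x by (simp add: a_def err_def)
      have sumS: "(\<Sum>x\<in>S. g x) = (\<Sum>j<M. g (j, True) + g (j, False))" for g :: "nat \<times> bool \<Rightarrow> real"
      proof -
        have "(\<Sum>j<M. \<Sum>b\<in>(UNIV::bool set). g (j, b)) = (\<Sum>(j, b)\<in>S. g (j, b))"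
          unfolding S_def by (rule sum.cartesian_product)
        moreover have "(\<Sum>b\<in>(UNIV::bool set). g (j, b)) = g (j, True) + g (j, False)" for j
          by (simp add: UNIV_bool add.commute)
        ultimately show ?thesis by (simp add: case_prod_beta')
      qed
      have "e i powr q \<le> (\<Sum>x\<in>S. a x) powr q"
        using e_le[of i] q by (intro powr_mono2) (auto simp: e_def sumS a_def distrib_left)
      also have "\<dots> \<le> real (card S) powr (q - 1) * (\<Sum>x\<in>S. a x powr q)"
        using q by (intro power_mean finS a0) auto
      also have "(\<Sum>x\<in>S. a x powr q) \<le> (\<Sum>x\<in>S. ((1/2)^(fst x)) powr q * (4 powr (q - 1) * P i (snd x) (fst x) * n powr (1 - q)))"
      proof (rule sum_mono)
        fix x assume "x \<in> S"
        hence "fst x < M" by (auto simp: S_def)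
        hence "err i (snd x) (fst x) powr q \<le> 4 powr (q - 1) * P i (snd x) (fst x) * n powr (1 - q)"
          by (rule errb)
        moreover have "a x powr q = ((1/2)^(fst x)) powr q * err i (snd x) (fst x) powr q"
          by (simp add: a_def err_def powr_mult)
        ultimately show "a x powr q \<le> ((1/2)^(fst x)) powr q * (4 powr (q - 1) * P i (snd x) (fst x) * n powr (1 - q))"
          by (simp add: mult_left_mono)
      qed
      also have "(\<Sum>x\<in>S. ((1/2)^(fst x)) powr q * (4 powr (q - 1) * P i (snd x) (fst x) * n powr (1 - q)))
          = C0 * (\<Sum>j<M. ((1/2)^j) powr q * (P i True j + P i False j))"
      proof -
        have "(\<Sum>x\<in>S. ((1/2)^(fst x)) powr q * (4 powr (q - 1) * P i (snd x) (fst x) * n powr (1 - q)))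
            = (\<Sum>x\<in>S. C0 * (((1/2)^(fst x)) powr q * P i (snd x) (fst x)))"
          by (rule sum.cong[OF refl]) (simp add: C0_def mult_ac)
        also have "\<dots> = C0 * (\<Sum>x\<in>S. ((1/2)^(fst x)) powr q * P i (snd x) (fst x))"
          by (rule sum_distrib_left[symmetric])
        also have "(\<Sum>x\<in>S. ((1/2)^(fst x)) powr q * P i (snd x) (fst x)) = (\<Sum>j<M. ((1/2)^j) powr q * (P i True j + P i False j))"
          by (simp add: sumS distrib_left)
        finally show ?thesis .
      qed
      finally show ?thesis using cardS q
        by (simp add: mult_left_mono mult.assoc)
    qed
    have lev_j: "((1/2)^j) powr q * (\<Sum>i\<in>UNIV. P i True j + P i False j) \<le> 2 * 2 powr q" if "j < M" for j
    proof -
      have ls: "(\<Sum>i\<in>UNIV. P i True j + P i False j) \<le> (if Suc j < M then (2^Suc j) powr q else real d)"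
      proof -
        have "(\<Sum>i\<in>UNIV. P i True j + P i False j) = (\<Sum>i\<in>UNIV. (\<integral>w. lev M j (max 0 (1 * w $ i)) \<partial>D) + (\<integral>w. lev M j (max 0 (-1 * w $ i)) \<partial>D))"
          by (simp add: P_def \<Phi>_def sg_def)
        moreover have q0: "q > 0" using q by simp
        ultimately show ?thesis using level_sum[OF D q0, of M j] unfolding d_def by linarith
      qed
      have "((1/2)^j) powr q * (\<Sum>i\<in>UNIV. P i True j + P i False j)
            \<le> ((1/2)^j) powr q * (if Suc j < M then (2^Suc j) powr q else real d)"
        by (intro mult_left_mono ls) simp
      also have "\<dots> \<le> 2 * 2 powr q"
      proof (cases "Suc j < M")
        case True
        have "((1/2::real)^j) powr q * (2^Suc j) powr q = ((1/2)^j * 2^Suc j) powr q"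
          by (simp add: powr_mult)
        also have "(1/2::real)^j * 2^Suc j = 2" by (simp add: power_mult_distrib[symmetric] power_one_over)
        finally show ?thesis using True by simp
      next
        case False
        hence "j = M - 1" using that by simp
        thus ?thesis using False tail_num[OF q(1) _ M1 dM] d2 by simp
      qed
      finally show ?thesis .
    qed
    have "(\<Sum>i\<in>UNIV. e i powr q) \<le> (\<Sum>i\<in>UNIV. (2 * real M) powr (q - 1) * C0 * (\<Sum>j<M. ((1/2)^j) powr q * (P i True j + P i False j)))"
      by (rule sum_mono) (rule epow)
    also have "\<dots> = (2 * real M) powr (q - 1) * C0 * (\<Sum>j<M. ((1/2)^j) powr q * (\<Sum>i\<in>UNIV. P i True j + P i False j))"
    proof -
      have "(\<Sum>i\<in>UNIV. (\<Sum>j<M. ((1/2::real)^j) powr q * (P i True j + P i False j)))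
          = (\<Sum>j<M. \<Sum>i\<in>UNIV. ((1/2::real)^j) powr q * (P i True j + P i False j))"
        by (rule sum.swap)
      also have "\<dots> = (\<Sum>j<M. ((1/2)^j) powr q * (\<Sum>i\<in>UNIV. P i True j + P i False j))"
        by (simp add: sum_distrib_left)
      finally show ?thesis by (simp add: sum_distrib_left[symmetric])
    qed
    also have "\<dots> \<le> (2 * real M) powr (q - 1) * C0 * (\<Sum>j<M. 2 * 2 powr q)"
      using C0 by (intro mult_left_mono sum_mono lev_j) auto
    also have "\<dots> = (2 * real M) powr (q - 1) * 4 powr (q - 1) * n powr (1 - q) * (real M * (2 * 2 powr q))"
      by (simp add: C0_def)
    also have "\<dots> \<le> \<epsilon> powr q"
      by (rule final_num[OF q(1) e L1 _ hML n_def]) (use M1 in simp)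
    finally have tot: "(\<Sum>i\<in>UNIV. e i powr q) \<le> \<epsilon> powr q" .
    have "lq_norm q (out as - \<mu>) = (\<Sum>i\<in>UNIV. e i powr q) powr (1 / q)"
      by (simp add: lq_norm_def e_def)
    also have "\<dots> \<le> (\<epsilon> powr q) powr (1 / q)"
      using tot q by (intro powr_mono2) (auto intro: sum_nonneg)
    also have "\<dots> = \<epsilon>" using q e by (simp add: powr_powr)
    finally show "lq_norm q (out as - (\<integral>w. w \<partial>D)) \<le> \<epsilon>" by (simp add: \<mu>_def)
  qed
  show ?thesis
    using kbound solves by (auto simp: n_def L_def d_def)
qed

end
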